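(* Let $\mathcal{A}$ be the Bose--Mesner algebra of a symmetric association scheme with adjacency matrices $A_0=I,A_1,\dots,A_d$ of size $n$ and first eigenmatrix $P=(P_{i,j})_{0\leq i,j\leq d}$. For indeterminates $X_{i,j}$ ($0\leq i<j\leq d$) define \[ e_k=\sum_{0\leq i<j\leq d}P_{k,i}P_{k,j}X_{i,j}+\sum_{i=0}^dP_{k,i}^2-n\qquad(k=1,\dots,d). \] Let $w_0,\dots,w_d$ be nonzero complex numbers and $a_{i,j}$ ($0\leq i,j\leq d$, $i\neq j$) complex numbers with $\frac{w_j}{w_i}+\frac{w_i}{w_j}=a_{i,j}$ for all $i\neq j$. Let $W=\sum_{j=0}^dw_jA_j$. Then the following are equivalent: (i) $W$ is a type-II matrix; (ii) $(a_{i,j})_{0\leq i<j\leq d}$ is a common zero of $e_1,\dots,e_d$. Moreover, if one of these holds, $a_{i,j}\in\mathbb{R}$ for all $0\leq i<j\leq d$, and $-2<a_{i_0,i_1}<2$ for some $0\leq i_0<i_1\leq d$, then $W$ is a scalar multiple of a complex Hadamard matrix.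
   Context: A symmetric association scheme with adjacency matrices $A_0=I,A_1,\dots,A_d$ means: the $A_i$ are symmetric $n\times n$ $(0,1)$-matrices summing to the all-ones matrix $J$, and their span $\mathcal{A}$ (the Bose--Mesner algebra) is closed under multiplication; $\mathcal{A}$ has primitive idempotents $E_0=\frac1nJ,E_1,\dots,E_d$, and the first eigenmatrix $P$ is defined by $A_j=\sum_{i}P_{i,j}E_i$. A type-II matrix is an $n\times n$ matrix $W$ with nonzero complex entries with $W(W^{(-)})^\top=nI$, $W^{(-)}$ the entrywise inverse. A complex Hadamard matrix is an $n\times n$ complex matrix $H$ with all entries of absolute value $1$ and $HH^*=nI$. *)

theory Defs
  imports "HOL-Analysis.Analysis"
begin

text \<open>Matrices are complex n x n matrices indexed by a finite type 'n (n = CARD('n)).\<close>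

definition cmul :: "complex \<Rightarrow> complex^'n^'m \<Rightarrow> complex^'n^'m" where
  "cmul c M = (\<chi> i j. c * M$i$j)"

definition allones :: "complex^'n^'m" where
  "allones = (\<chi> i j. 1)"

definition entry_inv :: "complex^'n^'m \<Rightarrow> complex^'n^'m" where
  "entry_inv M = (\<chi> i j. inverse (M$i$j))"

definition conj_transpose :: "complex^'n^'m \<Rightarrow> complex^'m^'n" where
  "conj_transpose M = (\<chi> i j. cnj (M$j$i))"

definition bm_algebra :: "(nat \<Rightarrow> complex^'n^'n) \<Rightarrow> nat \<Rightarrow> (complex^'n^'n) set" where
  "bm_algebra A d = {M. \<exists>c. M = (\<Sum>j\<le>d. cmul (c j) (A j))}"

definition symmetric_assoc_scheme :: "(nat \<Rightarrow> complex^'n::finite^'n) \<Rightarrow> nat \<Rightarrow> bool" where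
  "symmetric_assoc_scheme A d \<longleftrightarrow>
     A 0 = mat 1 \<and>
     (\<forall>i\<le>d. transpose (A i) = A i \<and> A i \<noteq> 0 \<and> (\<forall>r s. A i $ r $ s \<in> {0, 1})) \<and>
     (\<Sum>i\<le>d. A i) = allones \<and>
     (\<forall>i\<le>d. \<forall>j\<le>d. A i ** A j \<in> bm_algebra A d)"

definition primitive_idempotent :: "(complex^'n::finite^'n) set \<Rightarrow> complex^'n^'n \<Rightarrow> bool" where
  "primitive_idempotent S E \<longleftrightarrow>
     E \<in> S \<and> E ** E = E \<and> E \<noteq> 0 \<and>
     \<not> (\<exists>F\<in>S. \<exists>G\<in>S. F ** F = F \<and> G ** G = G \<and> F \<noteq> 0 \<and> G \<noteq> 0 \<and>
            F ** G = 0 \<and> G ** F = 0 \<and> E = F + G)"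

definition first_eigenmatrix ::
  "(nat \<Rightarrow> complex^'n::finite^'n) \<Rightarrow> nat \<Rightarrow> (nat \<Rightarrow> nat \<Rightarrow> complex) \<Rightarrow> bool" where
  "first_eigenmatrix A d P \<longleftrightarrow>
     (\<exists>E :: nat \<Rightarrow> complex^'n^'n.
        E 0 = cmul (1 / of_nat CARD('n)) allones \<and>
        inj_on E {..d} \<and>
        E ` {..d} = {F. primitive_idempotent (bm_algebra A d) F} \<and>
        (\<forall>j\<le>d. A j = (\<Sum>i\<le>d. cmul (P i j) (E i))))"

definition type_II :: "complex^'n::finite^'n \<Rightarrow> bool" where
  "type_II W \<longleftrightarrow> (\<forall>i j. W$i$j \<noteq> 0) \<and>
     W ** transpose (entry_inv W) = mat (of_nat CARD('n))"

definition complex_hadamard :: "complex^'n::finite^'n \<Rightarrow> bool" where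
  "complex_hadamard H \<longleftrightarrow> (\<forall>i j. norm (H$i$j) = 1) \<and>
     H ** conj_transpose H = mat (of_nat CARD('n))"

text \<open>The polynomial e_k evaluated at the point x (x i j for 0 <= i < j <= d).\<close>
definition e_poly :: "(nat \<Rightarrow> nat \<Rightarrow> complex) \<Rightarrow> nat \<Rightarrow> nat \<Rightarrow> nat \<Rightarrow> (nat \<Rightarrow> nat \<Rightarrow> complex) \<Rightarrow> complex" where
  "e_poly P d n k x =
     (\<Sum>i\<le>d. \<Sum>j\<in>{i<..d}. P k i * P k j * x i j) + (\<Sum>i\<le>d. (P k i)^2) - of_nat n"

end

theory Submission
  imports Defs
begin



lemma cmul_comp[simp]: "cmul c M $ i $ j = c * M $ i $ j"
  by (simp add: cmul_def)

lemma cmul_mult_left: "cmul c X ** Y = cmul c (X ** Y)"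
  by (simp add: vec_eq_iff matrix_matrix_mult_def sum_distrib_left mult.assoc)

lemma cmul_mult_right: "X ** cmul c Y = cmul c (X ** Y)"
  by (simp add: vec_eq_iff matrix_matrix_mult_def sum_distrib_left mult_ac)

lemma cmul_cmul[simp]: "cmul c (cmul e X) = cmul (c * e) X"
  by (simp add: vec_eq_iff mult.assoc)

lemma cmul_one[simp]: "cmul 1 X = X" by (simp add: vec_eq_iff)
lemma cmul_zero[simp]: "cmul 0 X = 0" by (simp add: vec_eq_iff)
lemma cmul_zero2[simp]: "cmul c 0 = 0" by (simp add: vec_eq_iff)
lemma cmul_add: "cmul c (X + Y) = cmul c X + cmul c Y" by (simp add: vec_eq_iff algebra_simps)
lemma cmul_add2: "cmul (c + e) X = cmul c X + cmul e X" by (simp add: vec_eq_iff algebra_simps)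
lemma cmul_sum: "cmul c (\<Sum>i\<in>I. X i) = (\<Sum>i\<in>I. cmul c (X i))"
  by (simp add: vec_eq_iff sum_distrib_left)
lemma cmul_sum2: "cmul (\<Sum>i\<in>I. f i) X = (\<Sum>i\<in>I. cmul (f i) X)"
  by (simp add: vec_eq_iff sum_distrib_right)

lemma mult_sum_left: "(\<Sum>i\<in>I. X i) ** Y = (\<Sum>i\<in>I. X i ** Y)"
  by (simp add: vec_eq_iff matrix_matrix_mult_def sum_distrib_right sum.swap[of _ I])

lemma mult_sum_right: "Y ** (\<Sum>i\<in>I. X i) = (\<Sum>i\<in>I. Y ** X i)"
  by (simp add: vec_eq_iff matrix_matrix_mult_def sum_distrib_left sum.swap[of _ I])

lemma mult_diff_left: "(X - Z) ** (Y::complex^'n::finite^'n) = X ** Y - Z ** Y"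
  by (simp add: vec_eq_iff matrix_matrix_mult_def algebra_simps sum_subtractf)

lemma mult_diff_right: "(Y::complex^'n::finite^'n) ** (X - Z) = Y ** X - Y ** Z"
  by (simp add: vec_eq_iff matrix_matrix_mult_def algebra_simps sum_subtractf)

lemma mult_add_left: "(X + Z) ** (Y::complex^'n::finite^'n) = X ** Y + Z ** Y"
  by (simp add: vec_eq_iff matrix_matrix_mult_def algebra_simps sum.distrib)

lemma transpose_sum: "transpose (\<Sum>i\<in>I. X i) = (\<Sum>i\<in>I. transpose (X i))"
  by (simp add: vec_eq_iff transpose_def)

lemma transpose_cmul: "transpose (cmul c X) = cmul c (transpose X)"
  by (simp add: vec_eq_iff transpose_def)

lemma cmul_cancel: assumes "cmul c X = cmul e X" "X \<noteq> 0" shows "c = e"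
proof -
  from assms(2) obtain i j where "X $ i $ j \<noteq> 0" by (metis vec_eq_iff zero_index)
  moreover have "c * X $ i $ j = e * X $ i $ j" using assms(1) by (metis cmul_comp)
  ultimately show ?thesis by simp
qed




locale bm =
  fixes A :: "nat \<Rightarrow> complex^'n::finite^'n" and d :: nat
  assumes scheme: "symmetric_assoc_scheme A d"
begin

abbreviation "S \<equiv> bm_algebra A d"

lemma A0: "A 0 = mat 1" using scheme by (simp add: symmetric_assoc_scheme_def)
lemma Asym: "i \<le> d \<Longrightarrow> transpose (A i) = A i" using scheme by (simp add: symmetric_assoc_scheme_def)
lemma A01: "i \<le> d \<Longrightarrow> A i $ r $ s = 0 \<or> A i $ r $ s = 1" using scheme by (auto simp add: symmetric_assoc_scheme_def)
lemma Asum: "(\<Sum>i\<le>d. A i) = allones" using scheme by (simp add: symmetric_assoc_scheme_def)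
lemma Aprod: "i \<le> d \<Longrightarrow> j \<le> d \<Longrightarrow> A i ** A j \<in> S" using scheme by (simp add: symmetric_assoc_scheme_def)

lemma S_sym: "X \<in> S \<Longrightarrow> transpose X = X"
  by (auto simp: bm_algebra_def transpose_sum transpose_cmul Asym intro!: sum.cong)

lemma S_zero: "0 \<in> S"
  unfolding bm_algebra_def by (rule CollectI, rule exI[of _ "\<lambda>_. 0"], simp)

lemma S_add: "X \<in> S \<Longrightarrow> Y \<in> S \<Longrightarrow> X + Y \<in> S"
proof -
  assume "X \<in> S" "Y \<in> S"
  then obtain c e where "X = (\<Sum>j\<le>d. cmul (c j) (A j))" "Y = (\<Sum>j\<le>d. cmul (e j) (A j))"
    by (auto simp: bm_algebra_def)
  then have "X + Y = (\<Sum>j\<le>d. cmul (c j + e j) (A j))" by (simp add: cmul_add2 sum.distrib)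
  then show ?thesis by (auto simp: bm_algebra_def)
qed

lemma S_cmul: "X \<in> S \<Longrightarrow> cmul c X \<in> S"
proof -
  assume "X \<in> S"
  then obtain e where "X = (\<Sum>j\<le>d. cmul (e j) (A j))" by (auto simp: bm_algebra_def)
  then have "cmul c X = (\<Sum>j\<le>d. cmul (c * e j) (A j))" by (simp add: cmul_sum)
  then show ?thesis by (auto simp: bm_algebra_def)
qed

lemma S_diff: "X \<in> S \<Longrightarrow> Y \<in> S \<Longrightarrow> X - Y \<in> S"
proof -
  assume "X \<in> S" "Y \<in> S"
  have "X - Y = X + cmul (-1) Y" by (simp add: vec_eq_iff)
  then show ?thesis using S_add S_cmul \<open>X \<in> S\<close> \<open>Y \<in> S\<close> by metis
qed

lemma S_sum: "finite I \<Longrightarrow> (\<And>i. i \<in> I \<Longrightarrow> X i \<in> S) \<Longrightarrow> (\<Sum>i\<in>I. X i) \<in> S"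
  by (induction I rule: finite_induct) (auto intro: S_add S_zero)

lemma S_mult: "X \<in> S \<Longrightarrow> Y \<in> S \<Longrightarrow> X ** Y \<in> S"
proof -
  assume "X \<in> S" "Y \<in> S"
  then obtain c e where X: "X = (\<Sum>j\<le>d. cmul (c j) (A j))" and Y: "Y = (\<Sum>j\<le>d. cmul (e j) (A j))"
    by (auto simp: bm_algebra_def)
  have "X ** Y = (\<Sum>j\<le>d. \<Sum>i\<le>d. cmul (e j * c i) (A i ** A j))"
    unfolding X Y by (simp add: mult_sum_left mult_sum_right cmul_mult_left cmul_mult_right
       cmul_sum)
  also have "\<dots> \<in> S" by (intro S_sum S_cmul Aprod) auto
  finally show ?thesis .
qed

lemma S_comm: "X \<in> S \<Longrightarrow> Y \<in> S \<Longrightarrow> X ** Y = Y ** X"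
  by (metis S_mult S_sym matrix_transpose_mul)

lemma A_in_S: "i \<le> d \<Longrightarrow> A i \<in> S"
  unfolding bm_algebra_def
  by (rule CollectI, rule exI[of _ "\<lambda>j. if j = i then 1 else 0"])
     (simp add: if_distrib[of "\<lambda>c. cmul c _"] sum.delta cong: if_cong)

lemma prim_orth:
  assumes E: "primitive_idempotent S E" and F: "primitive_idempotent S F" and ne: "E \<noteq> F"
  shows "E ** F = 0"
proof -
  have ES: "E \<in> S" "E ** E = E" and FS: "F \<in> S" "F ** F = F"
    using E F by (auto simp: primitive_idempotent_def)
  have key: "E ** F = 0 \<or> E ** F = E" if E: "primitive_idempotent S E" and F: "primitive_idempotent S F" for E F
  proof -
    have ES: "E \<in> S" "E ** E = E" and FS: "F \<in> S" "F ** F = F"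
      using E F by (auto simp: primitive_idempotent_def)
    define G where "G = E ** F"
    have GS: "G \<in> S" using ES FS by (simp add: G_def S_mult)
    have EG: "E ** G = G" by (simp add: G_def matrix_mul_assoc ES)
    have GE: "G ** E = G" using S_comm[OF GS ES(1)] EG by simp
    have GG: "G ** G = G"
    proof -
      have "G ** G = (G ** E) ** F" by (simp add: G_def matrix_mul_assoc)
      also have "\<dots> = G ** F" by (simp add: GE)
      also have "\<dots> = E ** (F ** F)" by (simp add: G_def matrix_mul_assoc)
      also have "\<dots> = G" by (simp add: G_def FS(2))
      finally show ?thesis .
    qed
    define H where "H = E - G"
    have HS: "H \<in> S" using ES GS by (simp add: H_def S_diff)
    have HH: "H ** H = H" by (simp add: H_def mult_diff_left mult_diff_right ES EG GE GG)
    have HG: "H ** G = 0" by (simp add: H_def mult_diff_left EG GG)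
    have GH: "G ** H = 0" by (simp add: H_def mult_diff_right GE GG)
    have "E = H + G" by (simp add: H_def)
    have "H = 0 \<or> G = 0"
    proof (rule ccontr)
      assume "\<not> (H = 0 \<or> G = 0)"
      then have "\<exists>F\<in>S. \<exists>G\<in>S. F ** F = F \<and> G ** G = G \<and> F \<noteq> 0 \<and> G \<noteq> 0 \<and>
            F ** G = 0 \<and> G ** F = 0 \<and> E = F + G"
        apply -
        apply (rule bexI[OF _ HS], rule bexI[OF _ GS])
        using HH GG HG GH \<open>E = H + G\<close> by simp
      moreover have "\<not> (\<exists>F\<in>S. \<exists>G\<in>S. F ** F = F \<and> G ** G = G \<and> F \<noteq> 0 \<and> G \<noteq> 0 \<and>
            F ** G = 0 \<and> G ** F = 0 \<and> E = F + G)" using E unfolding primitive_idempotent_def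
        by (elim conjE) assumption
      ultimately show False by contradiction
    qed
    then show ?thesis
    proof
      assume "H = 0" then have "E = G" using \<open>E = H + G\<close> by simp
      then show ?thesis unfolding G_def by simp
    next
      assume "G = 0" then show ?thesis unfolding G_def by simp
    qed
  qed
  have 1: "E ** F = 0 \<or> E ** F = E" using key E F by blast
  have 2: "F ** E = 0 \<or> F ** E = F" using key E F by blast
  have "F ** E = E ** F" using S_comm ES FS by metis
  then show ?thesis using 1 2 ne by auto
qed

end



lemma rearr:
  fixes X :: "'k \<Rightarrow> complex^'n::finite^'n"
  shows "(\<Sum>j\<in>J. \<Sum>i\<in>I. cmul (c i j) (\<Sum>k\<in>K. cmul (p i j k) (X k)))
       = (\<Sum>k\<in>K. cmul (\<Sum>j\<in>J. \<Sum>i\<in>I. c i j * p i j k) (X k))"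
proof -
  have "(\<Sum>j\<in>J. \<Sum>i\<in>I. cmul (c i j) (\<Sum>k\<in>K. cmul (p i j k) (X k)))
      = (\<Sum>j\<in>J. \<Sum>i\<in>I. \<Sum>k\<in>K. cmul (c i j * p i j k) (X k))"
    by (simp add: cmul_sum)
  also have "\<dots> = (\<Sum>j\<in>J. \<Sum>k\<in>K. \<Sum>i\<in>I. cmul (c i j * p i j k) (X k))"
    by (rule sum.cong[OF refl], rule sum.swap)
  also have "\<dots> = (\<Sum>k\<in>K. \<Sum>j\<in>J. \<Sum>i\<in>I. cmul (c i j * p i j k) (X k))"
    by (rule sum.swap)
  also have "\<dots> = (\<Sum>k\<in>K. cmul (\<Sum>j\<in>J. \<Sum>i\<in>I. c i j * p i j k) (X k))"
    by (simp add: cmul_sum2)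
  finally show ?thesis .
qed

context bm begin

lemma part: "\<exists>i0\<le>d. \<forall>i\<le>d. A i $ r $ s = (if i = i0 then 1 else 0)"
proof -
  define K where "K = {i\<in>{..d}. A i $ r $ s = 1}"
  have "(\<Sum>i\<le>d. A i $ r $ s) = 1" using Asum by (simp add: vec_eq_iff allones_def)
  moreover have "(\<Sum>i\<le>d. A i $ r $ s) = (\<Sum>i\<le>d. if i \<in> K then 1 else 0)"
    by (rule sum.cong[OF refl]) (use A01 in \<open>force simp: K_def\<close>)
  moreover have "(\<Sum>i\<le>d. if i \<in> K then (1::complex) else 0) = of_nat (card K)"
    by (simp add: sum.If_cases K_def Int_def conj_commute)
  ultimately have "card K = 1" by simp
  then obtain i0 where K: "K = {i0}" by (auto simp: card_Suc_eq)
  then have "i0 \<le> d" by (auto simp: K_def)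
  moreover have "\<forall>i\<le>d. A i $ r $ s = (if i = i0 then 1 else 0)"
  proof (intro allI impI)
    fix i assume "i \<le> d"
    then show "A i $ r $ s = (if i = i0 then 1 else 0)" using A01[OF \<open>i \<le> d\<close>, of r s] K
      by (auto simp: K_def set_eq_iff)
  qed
  ultimately show ?thesis by blast
qed

lemma part2: obtains i0 where "i0 \<le> d" "\<And>f. (\<Sum>j\<le>d. cmul (f j) (A j)) $ r $ s = f i0"
proof -
  obtain i0 where i0: "i0 \<le> d" "\<forall>i\<le>d. A i $ r $ s = (if i = i0 then 1 else 0)"
    using part by blast
  have "(\<Sum>j\<le>d. cmul (f j) (A j)) $ r $ s = f i0" for f
  proof -
    have "(\<Sum>j\<le>d. cmul (f j) (A j)) $ r $ s = (\<Sum>j\<le>d. if j = i0 then f j else 0)"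
      unfolding sum_component cmul_comp using i0(2) by (intro sum.cong) auto
    also have "\<dots> = f i0" using i0(1) by simp
    finally show ?thesis .
  qed
  then show ?thesis using that i0(1) by blast
qed

end

locale bm_eig = bm A d for A :: "nat \<Rightarrow> complex^'n::finite^'n" and d +
  fixes P :: "nat \<Rightarrow> nat \<Rightarrow> complex" and E :: "nat \<Rightarrow> complex^'n^'n"
  assumes E0: "E 0 = cmul (1 / of_nat CARD('n)) allones"
    and Einj: "inj_on E {..d}"
    and Eim: "E ` {..d} = {F. primitive_idempotent (bm_algebra A d) F}"
    and AE: "\<forall>j\<le>d. A j = (\<Sum>i\<le>d. cmul (P i j) (E i))"
begin

lemma Eprim: "k \<le> d \<Longrightarrow> primitive_idempotent S (E k)" using Eim by auto
lemma ES: "k \<le> d \<Longrightarrow> E k \<in> S" using Eprim by (simp add: primitive_idempotent_def)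
lemma EE: "k \<le> d \<Longrightarrow> E k ** E k = E k" using Eprim by (simp add: primitive_idempotent_def)
lemma Enz: "k \<le> d \<Longrightarrow> E k \<noteq> 0" using Eprim by (simp add: primitive_idempotent_def)

lemma Eorth: "k \<le> d \<Longrightarrow> l \<le> d \<Longrightarrow> E k ** E l = (if k = l then E k else 0)"
proof (cases "k = l")
  case True then show "k \<le> d \<Longrightarrow> l \<le> d \<Longrightarrow> ?thesis" using EE by simp
next
  case False
  assume "k \<le> d" "l \<le> d"
  then have "E k \<noteq> E l" using Einj False by (auto dest: inj_onD)
  then show ?thesis using prim_orth Eprim \<open>k \<le> d\<close> \<open>l \<le> d\<close> False by simp
qed

lemma AjE: "j \<le> d \<Longrightarrow> l \<le> d \<Longrightarrow> A j ** E l = cmul (P l j) (E l)"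
proof -
  assume j: "j \<le> d" and l: "l \<le> d"
  have "A j ** E l = (\<Sum>i\<le>d. cmul (P i j) (E i)) ** E l" using AE j by simp
  also have "\<dots> = (\<Sum>i\<le>d. if i = l then cmul (P i j) (E i) else 0)"
    unfolding mult_sum_left cmul_mult_left
    by (rule sum.cong[OF refl]) (simp add: Eorth l)
  also have "\<dots> = cmul (P l j) (E l)" using l by simp
  finally show ?thesis .
qed

lemma EAj: "j \<le> d \<Longrightarrow> l \<le> d \<Longrightarrow> E l ** A j = cmul (P l j) (E l)"
  using AjE S_comm ES A_in_S by metis

lemma P0: "l \<le> d \<Longrightarrow> P l 0 = 1"
proof -
  assume l: "l \<le> d"
  have "cmul (P l 0) (E l) = cmul 1 (E l)" using AjE[of 0 l] l A0 by simp
  then show ?thesis using cmul_cancel Enz l by blast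
qed

lemma Esum: "(\<Sum>k\<le>d. E k) = mat 1"
proof -
  have "mat 1 = (\<Sum>k\<le>d. cmul (P k 0) (E k))" using AE A0 by (metis le0)
  also have "\<dots> = (\<Sum>k\<le>d. E k)" by (rule sum.cong) (auto simp: P0)
  finally show ?thesis by simp
qed

lemma AA: "i \<le> d \<Longrightarrow> j \<le> d \<Longrightarrow> A i ** A j = (\<Sum>k\<le>d. cmul (P k i * P k j) (E k))"
proof -
  assume i: "i \<le> d" and j: "j \<le> d"
  have "A i ** A j = (\<Sum>k\<le>d. cmul (P k i) (E k)) ** A j" using AE i by simp
  also have "\<dots> = (\<Sum>k\<le>d. cmul (P k i * P k j) (E k))"
    unfolding mult_sum_left cmul_mult_left
    by (rule sum.cong[OF refl]) (simp add: EAj j)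
  finally show ?thesis .
qed

end



lemma ioc_Suc: "i \<le> d \<Longrightarrow> {i<..Suc d} = insert (Suc d) {i<..(d::nat)}"
  by auto

lemma sum_sq: "(\<Sum>i\<le>(d::nat). \<Sum>j\<le>d. f i j) = (\<Sum>i\<le>d. f i i) + (\<Sum>i\<le>d. \<Sum>j\<in>{i<..d}. f i j + f j i :: 'a::comm_monoid_add)"
proof (induction d)
  case 0 then show ?case by simp
next
  case (Suc d)
  have "(\<Sum>i\<le>Suc d. \<Sum>j\<le>Suc d. f i j) = (\<Sum>i\<le>d. \<Sum>j\<le>d. f i j) + (\<Sum>i\<le>d. f i (Suc d)) + (\<Sum>j\<le>d. f (Suc d) j) + f (Suc d) (Suc d)"
    by (simp add: sum.distrib ac_simps)
  also have "\<dots> = (\<Sum>i\<le>d. f i i) + f (Suc d) (Suc d) + ((\<Sum>i\<le>d. \<Sum>j\<in>{i<..d}. f i j + f j i) + (\<Sum>i\<le>d. f i (Suc d) + f (Suc d) i))"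
    by (simp add: Suc.IH sum.distrib ac_simps)
  also have "(\<Sum>i\<le>d. \<Sum>j\<in>{i<..d}. f i j + f j i) + (\<Sum>i\<le>d. f i (Suc d) + f (Suc d) i) = (\<Sum>i\<le>Suc d. \<Sum>j\<in>{i<..Suc d}. f i j + f j i)"
  proof -
    have "(\<Sum>i\<le>Suc d. \<Sum>j\<in>{i<..Suc d}. f i j + f j i) = (\<Sum>i\<le>d. \<Sum>j\<in>{i<..Suc d}. f i j + f j i)"
      by simp
    also have "\<dots> = (\<Sum>i\<le>d. (f i (Suc d) + f (Suc d) i) + (\<Sum>j\<in>{i<..d}. f i j + f j i))"
      by (rule sum.cong[OF refl]) (simp add: ioc_Suc)
    finally show ?thesis by (simp add: sum.distrib ac_simps)
  qed
  finally show ?case by (simp add: ac_simps)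
qed




lemma mat_mult_left: "mat c ** X = cmul c (X::complex^'n::finite^'n)"
proof -
  have "mat c = cmul c (mat 1 :: complex^'n^'n)" by (simp add: vec_eq_iff mat_def)
  then show ?thesis by (simp add: cmul_mult_left)
qed

context bm_eig begin

definition lam :: "(nat \<Rightarrow> complex) \<Rightarrow> nat \<Rightarrow> complex" where
  "lam w k = (\<Sum>j\<le>d. \<Sum>i\<le>d. inverse (w j) * w i * (P k i * P k j))"

lemma WV:
  "(\<Sum>j\<le>d. cmul (w j) (A j)) ** (\<Sum>j\<le>d. cmul (inverse (w j)) (A j)) = (\<Sum>k\<le>d. cmul (lam w k) (E k))"
proof -
  have "(\<Sum>j\<le>d. cmul (w j) (A j)) ** (\<Sum>j\<le>d. cmul (inverse (w j)) (A j))
     = (\<Sum>j\<le>d. \<Sum>i\<le>d. cmul (inverse (w j) * w i) (A i ** A j))"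
    by (simp add: mult_sum_left mult_sum_right cmul_mult_left cmul_mult_right cmul_sum)
  also have "\<dots> = (\<Sum>j\<le>d. \<Sum>i\<le>d. cmul (inverse (w j) * w i) (\<Sum>k\<le>d. cmul (P k i * P k j) (E k)))"
    by (intro sum.cong refl) (simp add: AA)
  also have "\<dots> = (\<Sum>k\<le>d. cmul (lam w k) (E k))"
    unfolding rearr lam_def ..
  finally show ?thesis .
qed

lemma sumE_mult: "l \<le> d \<Longrightarrow> (\<Sum>k\<le>d. cmul (c k) (E k)) ** E l = cmul (c l) (E l)"
proof -
  assume l: "l \<le> d"
  have "(\<Sum>k\<le>d. cmul (c k) (E k)) ** E l = (\<Sum>k\<le>d. if k = l then cmul (c k) (E k) else 0)"
    unfolding mult_sum_left cmul_mult_left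
    by (rule sum.cong[OF refl]) (simp add: Eorth l)
  also have "\<dots> = cmul (c l) (E l)" using l by simp
  finally show ?thesis .
qed

lemma sumE_diag: "(\<Sum>k\<le>d. E k $ r $ r) = 1"
proof -
  have "(\<Sum>k\<le>d. E k) $ r $ r = 1" by (simp add: Esum mat_def)
  then show ?thesis by simp
qed

lemma E0_diag: "E 0 $ r $ r = 1 / of_nat CARD('n)"
  by (simp add: E0 allones_def)

lemma main_equiv:
  assumes diag: "\<forall>r. (\<Sum>k\<le>d. cmul (lam w k) (E k)) $ r $ r = of_nat CARD('n)"
  shows "(\<Sum>k\<le>d. cmul (lam w k) (E k)) = mat (of_nat CARD('n)) \<longleftrightarrow> (\<forall>k\<in>{1..d}. lam w k = of_nat CARD('n))"
proof
  let ?N = "of_nat CARD('n) :: complex"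
  assume M: "(\<Sum>k\<le>d. cmul (lam w k) (E k)) = mat ?N"
  show "\<forall>k\<in>{1..d}. lam w k = ?N"
  proof
    fix k assume k: "k \<in> {1..d}"
    then have "cmul (lam w k) (E k) = cmul ?N (E k)"
      using sumE_mult[of k "lam w"] M by (simp add: mat_mult_left)
    then show "lam w k = ?N" using cmul_cancel Enz k by auto
  qed
next
  let ?N = "of_nat CARD('n) :: complex"
  assume L: "\<forall>k\<in>{1..d}. lam w k = ?N"
  have split: "{..d} = insert 0 {1..d}" by auto
  obtain r :: 'n where True by simp
  have "?N = (\<Sum>k\<le>d. cmul (lam w k) (E k)) $ r $ r" using diag by simp
  also have "\<dots> = lam w 0 * E 0 $ r $ r + (\<Sum>k\<in>{1..d}. ?N * E k $ r $ r)"
    unfolding split using L by simp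
  also have "(\<Sum>k\<in>{1..d}. ?N * E k $ r $ r) = ?N * (1 - E 0 $ r $ r)"
  proof -
    have "(\<Sum>k\<in>{1..d}. E k $ r $ r) = 1 - E 0 $ r $ r"
      using sumE_diag[of r] unfolding split by (simp add: algebra_simps)
    then show ?thesis by (simp add: sum_distrib_left[symmetric])
  qed
  finally have "?N = lam w 0 / ?N + ?N * (1 - 1 / ?N)" by (simp add: E0_diag)
  moreover have "?N \<noteq> 0" by simp
  ultimately have L0: "lam w 0 = ?N" by (simp add: field_simps)
  have "(\<Sum>k\<le>d. cmul (lam w k) (E k)) = (\<Sum>k\<le>d. cmul ?N (E k))"
  proof (rule sum.cong[OF refl])
    fix k assume "k \<in> {..d}"
    then show "cmul (lam w k) (E k) = cmul ?N (E k)"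
      using L L0 by (cases "k = 0") auto
  qed
  also have "\<dots> = mat ?N" by (simp add: cmul_sum[symmetric] Esum vec_eq_iff mat_def)
  finally show "(\<Sum>k\<le>d. cmul (lam w k) (E k)) = mat ?N" .
qed

end



lemma cnj_norm1: "norm (z::complex) = 1 \<Longrightarrow> cnj z = inverse z"
proof -
  assume n: "norm z = 1"
  have "z * cnj z = complex_of_real ((norm z)^2)" by (rule complex_norm_square[symmetric])
  then have "z * cnj z = 1" using n by simp
  moreover have "z \<noteq> 0" using n by auto
  ultimately show ?thesis by (metis inverse_unique)
qed

lemma ratio_real_or_norm:
  fixes x y :: complex
  assumes "x \<noteq> 0" "y \<noteq> 0" "x / y + y / x \<in> \<real>"
  shows "x / y \<in> \<real> \<or> norm x = norm y"
proof -
  define t where "t = x / y"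
  have t0: "t \<noteq> 0" using assms by (simp add: t_def)
  have "y / x = inverse t" by (simp add: t_def)
  then have "Im (t + inverse t) = 0" using assms(3) t_def by (simp add: complex_is_Real_iff)
  then have "Im t - Im t / ((Re t)^2 + (Im t)^2) = 0" by (simp add: power2_eq_square)
  then have "Im t * (1 - 1 / ((Re t)^2 + (Im t)^2)) = 0" by (simp add: algebra_simps)
  then have "Im t = 0 \<or> (Re t)^2 + (Im t)^2 = 1" by auto
  then show ?thesis
  proof
    assume "Im t = 0" then show ?thesis by (simp add: t_def complex_is_Real_iff)
  next
    assume "(Re t)^2 + (Im t)^2 = 1"
    then have "norm t = 1" by (simp add: norm_complex_def)
    then show ?thesis using assms by (simp add: t_def norm_divide)
  qed
qed

lemma real_sum_inv_ge2:
  fixes t :: complex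
  assumes "t \<in> \<real>" "t \<noteq> 0"
  shows "\<not> (-2 < Re (t + inverse t) \<and> Re (t + inverse t) < 2)"
proof -
  obtain r where r: "t = of_real r" using assms(1) by (auto elim: Reals_cases)
  have r0: "r \<noteq> 0" using assms r by auto
  have "Re (t + inverse t) = r + inverse r" by (simp add: r inverse_eq_divide)
  moreover have "\<bar>r + inverse r\<bar> \<ge> 2"
  proof (cases "r > 0")
    case True
    have "(r - 1)^2 \<ge> 0" by simp
    then have "r * r + 1 \<ge> 2 * r" by (simp add: power2_eq_square algebra_simps)
    then have "r + inverse r \<ge> 2" using True by (simp add: field_simps)
    then show ?thesis by simp
  next
    case False
    then have neg: "r < 0" using r0 by simp
    have "(r + 1)^2 \<ge> 0" by simp
    then have "r * r + 1 \<ge> - 2 * r" by (simp add: power2_eq_square algebra_simps)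
    then have "r + inverse r \<le> -2" using neg by (simp add: field_simps)
    then show ?thesis by simp
  qed
  ultimately show ?thesis by auto
qed




theorem lemma3p2:
  fixes A :: "nat \<Rightarrow> complex^'n::finite^'n"
    and d :: nat
    and P :: "nat \<Rightarrow> nat \<Rightarrow> complex"
    and w :: "nat \<Rightarrow> complex"
    and a :: "nat \<Rightarrow> nat \<Rightarrow> complex"
    and W :: "complex^'n^'n"
  assumes scheme: "symmetric_assoc_scheme A d"
    and eig: "first_eigenmatrix A d P"
    and w_nz: "\<forall>j\<le>d. w j \<noteq> 0"
    and a_def: "\<forall>i\<le>d. \<forall>j\<le>d. i \<noteq> j \<longrightarrow> w j / w i + w i / w j = a i j"
    and W_def: "W = (\<Sum>j\<le>d. cmul (w j) (A j))"
  shows "(type_II W \<longleftrightarrow> (\<forall>k\<in>{1..d}. e_poly P d CARD('n) k a = 0)) \<and>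
         ((type_II W \<and> (\<forall>i j. i < j \<and> j \<le> d \<longrightarrow> a i j \<in> \<real>) \<and>
           (\<exists>i0 i1. i0 < i1 \<and> i1 \<le> d \<and> -2 < Re (a i0 i1) \<and> Re (a i0 i1) < 2))
          \<longrightarrow> (\<exists>c H. complex_hadamard H \<and> W = cmul c H))"
proof -
  interpret bm A d using scheme by unfold_locales
  from eig obtain E :: "nat \<Rightarrow> complex^'n^'n" where
    E0: "E 0 = cmul (1 / of_nat CARD('n)) allones" and Einj: "inj_on E {..d}"
    and Eim: "E ` {..d} = {F. primitive_idempotent (bm_algebra A d) F}"
    and AE: "\<forall>j\<le>d. A j = (\<Sum>i\<le>d. cmul (P i j) (E i))"
    unfolding first_eigenmatrix_def by blast
  interpret bm_eig A d P E using E0 Einj Eim AE by unfold_locales auto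
  let ?N = "of_nat CARD('n) :: complex"
  define V where "V = (\<Sum>j\<le>d. cmul (inverse (w j)) (A j))"
  have Wrs: "\<exists>i0\<le>d. W $ r $ s = w i0 \<and> V $ r $ s = inverse (w i0)" for r s
  proof (rule part2[of r s])
    fix i0 assume i0: "i0 \<le> d" and h: "\<And>f. (\<Sum>j\<le>d. cmul (f j) (A j)) $ r $ s = f i0"
    show ?thesis unfolding W_def V_def using i0 h[of w] h[of "\<lambda>j. inverse (w j)"] by blast
  qed
  have Wnz: "W $ r $ s \<noteq> 0" for r s using Wrs[of r s] w_nz by auto
  have inv: "entry_inv W = V"
  proof -
    have "inverse (W $ i $ j) = V $ i $ j" for i j using Wrs[of i j] by auto
    then show ?thesis unfolding vec_eq_iff entry_inv_def by simp
  qed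
  have VS: "V \<in> S" unfolding V_def by (intro S_sum S_cmul A_in_S) auto
  have M: "W ** transpose (entry_inv W) = (\<Sum>k\<le>d. cmul (lam w k) (E k))"
  proof -
    have "W ** transpose (entry_inv W) = W ** V" by (simp only: inv S_sym[OF VS])
    also have "\<dots> = (\<Sum>k\<le>d. cmul (lam w k) (E k))" unfolding W_def V_def by (rule WV)
    finally show ?thesis .
  qed
  have diag: "(W ** transpose (entry_inv W)) $ r $ r = ?N" for r
    by (simp add: matrix_matrix_mult_def transpose_def entry_inv_def Wnz)
  have T: "type_II W \<longleftrightarrow> (\<forall>k\<in>{1..d}. lam w k = ?N)"
    unfolding type_II_def using Wnz main_equiv[of w] diag M by auto
  have lam_e: "lam w k = e_poly P d CARD('n) k a + ?N" for k
  proof -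
    define f where "f i j = w i / w j * (P k i * P k j)" for i j
    have "lam w k = (\<Sum>i\<le>d. \<Sum>j\<le>d. f i j)"
      unfolding lam_def f_def by (subst sum.swap) (simp add: divide_inverse ac_simps)
    also have "\<dots> = (\<Sum>i\<le>d. f i i) + (\<Sum>i\<le>d. \<Sum>j\<in>{i<..d}. f i j + f j i)"
      by (rule sum_sq)
    also have "(\<Sum>i\<le>d. f i i) = (\<Sum>i\<le>d. (P k i)^2)"
      by (rule sum.cong[OF refl]) (simp add: f_def w_nz power2_eq_square)
    also have "(\<Sum>i\<le>d. \<Sum>j\<in>{i<..d}. f i j + f j i) = (\<Sum>i\<le>d. \<Sum>j\<in>{i<..d}. P k i * P k j * a i j)"
    proof (intro sum.cong refl)
      fix i j assume i: "i \<in> {..d}" and j: "j \<in> {i<..d}"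
      then have ij: "i \<le> d" "j \<le> d" "i \<noteq> j" by auto
      have aij: "w j / w i + w i / w j = a i j" using a_def ij by blast
      have "f i j + f j i = (w j / w i + w i / w j) * (P k i * P k j)"
        unfolding f_def by (simp add: algebra_simps)
      then show "f i j + f j i = P k i * P k j * a i j"
        unfolding aij by (simp add: mult.commute)
    qed
    finally show ?thesis by (simp add: e_poly_def)
  qed
  have part1: "type_II W \<longleftrightarrow> (\<forall>k\<in>{1..d}. e_poly P d CARD('n) k a = 0)"
    unfolding T lam_e by simp
  have hadpart: "\<exists>c H. complex_hadamard H \<and> W = cmul c H"
    if tII: "type_II W" and re: "\<forall>i j. i < j \<and> j \<le> d \<longrightarrow> a i j \<in> \<real>"
      and ex: "\<exists>i0 i1. i0 < i1 \<and> i1 \<le> d \<and> -2 < Re (a i0 i1) \<and> Re (a i0 i1) < 2"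
  proof -
    from ex obtain i0 i1 where i01: "i0 < i1" "i1 \<le> d" "-2 < Re (a i0 i1)" "Re (a i0 i1) < 2" by blast
    have are: "w i / w j + w j / w i \<in> \<real>" if "i \<le> d" "j \<le> d" "i \<noteq> j" for i j
    proof (cases "i < j")
      case True
      then show ?thesis using re a_def that by (metis add.commute)
    next
      case False
      then have "j < i" using that by simp
      then show ?thesis using re a_def that by metis
    qed
    have wi0: "w i0 \<noteq> 0" and wi1: "w i1 \<noteq> 0" using w_nz i01 by auto
    have nr: "w i1 / w i0 \<notin> \<real>"
    proof
      assume "w i1 / w i0 \<in> \<real>"
      moreover have "w i1 / w i0 \<noteq> 0" using wi0 wi1 by simp
      moreover have "a i0 i1 = w i1 / w i0 + inverse (w i1 / w i0)"
        using a_def i01 by (simp add: inverse_eq_divide)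
      ultimately show False using real_sum_inv_ge2 i01 by metis
    qed
    have norm01: "norm (w i1) = norm (w i0)"
      using ratio_real_or_norm[OF wi1 wi0 are[of i1 i0]] i01 nr by auto
    have normj: "norm (w j) = norm (w i0)" if j: "j \<le> d" for j
    proof (rule ccontr)
      assume ne: "norm (w j) \<noteq> norm (w i0)"
      then have "j \<noteq> i0" "j \<noteq> i1" using norm01 by auto
      have wj: "w j \<noteq> 0" using w_nz j by simp
      have r0: "w j / w i0 \<in> \<real>"
        using ratio_real_or_norm[OF wj wi0 are[of j i0]] ne j i01 \<open>j \<noteq> i0\<close> by auto
      have r1: "w j / w i1 \<in> \<real>"
        using ratio_real_or_norm[OF wj wi1 are[of j i1]] ne j i01 \<open>j \<noteq> i1\<close> norm01 by auto
      have "w i1 / w i0 = (w j / w i0) / (w j / w i1)" using wj wi1 by (simp add: field_simps)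
      then have "w i1 / w i0 \<in> \<real>" using Reals_divide[OF r0 r1] by metis
      then show False using nr by simp
    qed
    define c where "c = w i0"
    define H where "H = cmul (inverse c) W"
    have c0: "c \<noteq> 0" using wi0 c_def by simp
    have Hn: "norm (H $ r $ s) = 1" for r s
    proof -
      obtain i where "i \<le> d" "W $ r $ s = w i" using Wrs by blast
      then show ?thesis using normj[of i] c0 by (simp add: H_def c_def norm_mult norm_inverse mult.commute)
    qed
    have Hinv: "cnj (H $ r $ s) = c * inverse (W $ r $ s)" for r s
      using cnj_norm1[OF Hn[of r s]] c0 by (simp add: H_def)
    have "H ** conj_transpose H = W ** transpose (entry_inv W)"
      unfolding vec_eq_iff
      by (simp add: matrix_matrix_mult_def conj_transpose_def transpose_def entry_inv_def Hinv)
         (simp add: H_def c0 field_simps)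
    also have "\<dots> = mat ?N" using tII by (simp add: type_II_def)
    finally have "complex_hadamard H" using Hn by (simp add: complex_hadamard_def)
    moreover have "W = cmul c H" by (simp add: H_def vec_eq_iff c0)
    ultimately show ?thesis by blast
  qed
  show ?thesis using part1 hadpart by blast
qed



end
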